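(* There exists a cellular automaton $(A^{\mathbb{Z}},T)$ (over some finite alphabet $A$) that is almost mean equicontinuous but not almost diam-mean equicontinuous.
   Context: A cellular automaton is a pair $(A^{\mathbb{Z}},T)$ with $A$ a finite set, $A^{\mathbb{Z}}$ equipped with the metric $d(x,y)=2^{-\min\{|j|:x_j\neq y_j\}}$ ($x\neq y$), $d(x,x)=0$, and $T:A^{\mathbb{Z}}\to A^{\mathbb{Z}}$ continuous and commuting with the shift $\sigma$, $(\sigma x)_i=x_{i+1}$. For a topological dynamical system $(X,T)$ ($X$ compact metric, $T$ continuous), with $B_\delta(x)$ the open ball of radius $\delta$: a point $x$ is a mean equicontinuity point if for every $\varepsilon>0$ there is $\delta>0$ such that for all $y\in B_\delta(x)$, $\limsup_{n\to\infty}\frac1n\sum_{i=1}^n d(T^ix,T^iy)<\varepsilon$; $x$ is a diam-mean equicontinuity point if for every $\varepsilon>0$ there is $\delta>0$ with $\limsup_{n\to\infty}\frac1n\sum_{i=1}^n\operatorname{diam}(T^iB_\delta(x))<\varepsilon$. The system is almost mean equicontinuous (resp. almost diam-mean equicontinuous) if the set of mean equicontinuity points (resp. diam-mean equicontinuity points) is residual, i.e. contains a countable intersection of dense open sets. *)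

theory Defs
  imports "HOL-Analysis.Analysis" "HOL-Library.Liminf_Limsup"
begin

definition ball_in :: "'a set \<Rightarrow> ('a \<Rightarrow> 'a \<Rightarrow> real) \<Rightarrow> 'a \<Rightarrow> real \<Rightarrow> 'a set" where
  "ball_in X d x r = {y \<in> X. d x y < r}"

definition diam_in :: "('a \<Rightarrow> 'a \<Rightarrow> real) \<Rightarrow> 'a set \<Rightarrow> real" where
  "diam_in d S = Sup {d a b | a b. a \<in> S \<and> b \<in> S}"

definition open_in_sp :: "'a set \<Rightarrow> ('a \<Rightarrow> 'a \<Rightarrow> real) \<Rightarrow> 'a set \<Rightarrow> bool" where
  "open_in_sp X d U \<longleftrightarrow> U \<subseteq> X \<and> (\<forall>x\<in>U. \<exists>r>0. ball_in X d x r \<subseteq> U)"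

definition dense_in_sp :: "'a set \<Rightarrow> ('a \<Rightarrow> 'a \<Rightarrow> real) \<Rightarrow> 'a set \<Rightarrow> bool" where
  "dense_in_sp X d U \<longleftrightarrow> (\<forall>x\<in>X. \<forall>r>0. ball_in X d x r \<inter> U \<noteq> {})"

definition residual_in :: "'a set \<Rightarrow> ('a \<Rightarrow> 'a \<Rightarrow> real) \<Rightarrow> 'a set \<Rightarrow> bool" where
  "residual_in X d S \<longleftrightarrow>
     (\<exists>U :: nat \<Rightarrow> 'a set. (\<forall>n. open_in_sp X d (U n) \<and> dense_in_sp X d (U n))
        \<and> (\<Inter>n. U n) \<subseteq> S)"

definition mean_eq_point :: "'a set \<Rightarrow> ('a \<Rightarrow> 'a \<Rightarrow> real) \<Rightarrow> ('a \<Rightarrow> 'a) \<Rightarrow> 'a \<Rightarrow> bool" where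
  "mean_eq_point X d T x \<longleftrightarrow>
     (\<forall>\<epsilon>>0. \<exists>\<delta>>0. \<forall>y\<in>ball_in X d x \<delta>.
        limsup (\<lambda>n. ereal ((1 / real n) * (\<Sum>i=1..n. d ((T ^^ i) x) ((T ^^ i) y)))) < ereal \<epsilon>)"

definition diam_mean_eq_point :: "'a set \<Rightarrow> ('a \<Rightarrow> 'a \<Rightarrow> real) \<Rightarrow> ('a \<Rightarrow> 'a) \<Rightarrow> 'a \<Rightarrow> bool" where
  "diam_mean_eq_point X d T x \<longleftrightarrow>
     (\<forall>\<epsilon>>0. \<exists>\<delta>>0.
        limsup (\<lambda>n. ereal ((1 / real n) * (\<Sum>i=1..n. diam_in d ((T ^^ i) ` ball_in X d x \<delta>)))) < ereal \<epsilon>)"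

definition almost_mean_eq :: "'a set \<Rightarrow> ('a \<Rightarrow> 'a \<Rightarrow> real) \<Rightarrow> ('a \<Rightarrow> 'a) \<Rightarrow> bool" where
  "almost_mean_eq X d T \<longleftrightarrow> residual_in X d {x \<in> X. mean_eq_point X d T x}"

definition almost_diam_mean_eq :: "'a set \<Rightarrow> ('a \<Rightarrow> 'a \<Rightarrow> real) \<Rightarrow> ('a \<Rightarrow> 'a) \<Rightarrow> bool" where
  "almost_diam_mean_eq X d T \<longleftrightarrow> residual_in X d {x \<in> X. diam_mean_eq_point X d T x}"

definition full_shift :: "nat set \<Rightarrow> (int \<Rightarrow> nat) set" where
  "full_shift A = {x. \<forall>i. x i \<in> A}"

definition cfg_dist :: "(int \<Rightarrow> nat) \<Rightarrow> (int \<Rightarrow> nat) \<Rightarrow> real" where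
  "cfg_dist x y = (if x = y then 0 else (1/2) ^ (LEAST n. \<exists>j. nat \<bar>j\<bar> = n \<and> x j \<noteq> y j))"

definition shift :: "(int \<Rightarrow> nat) \<Rightarrow> (int \<Rightarrow> nat)" where
  "shift x = (\<lambda>i. x (i + 1))"

definition cellular_automaton :: "nat set \<Rightarrow> ((int \<Rightarrow> nat) \<Rightarrow> (int \<Rightarrow> nat)) \<Rightarrow> bool" where
  "cellular_automaton A T \<longleftrightarrow>
     finite A \<and>
     (\<forall>x\<in>full_shift A. T x \<in> full_shift A) \<and>
     (\<forall>x\<in>full_shift A. \<forall>\<epsilon>>0. \<exists>\<delta>>0. \<forall>y\<in>full_shift A.
         cfg_dist x y < \<delta> \<longrightarrow> cfg_dist (T x) (T y) < \<epsilon>) \<and>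
     (\<forall>x\<in>full_shift A. T (shift x) = shift (T x))"

end

theory Submission
  imports Defs
begin


lemma cfg_dist_lt_iff:
  "cfg_dist x y < (1/2)^k \<longleftrightarrow> (\<forall>j. \<bar>j\<bar> \<le> int k \<longrightarrow> x j = y j)"
proof (cases "x = y")
  case True then show ?thesis by (simp add: cfg_dist_def)
next
  case False
  then obtain j0 where j0: "x j0 \<noteq> y j0" by auto
  define n0 where "n0 = (LEAST n. \<exists>j. nat \<bar>j\<bar> = n \<and> x j \<noteq> y j)"
  have ex: "\<exists>j. nat \<bar>j\<bar> = nat \<bar>j0\<bar> \<and> x j \<noteq> y j" using j0 by blast
  have n0w: "\<exists>j. nat \<bar>j\<bar> = n0 \<and> x j \<noteq> y j" unfolding n0_def by (rule LeastI_ex) (use ex in blast)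
  have n0le: "\<And>j. x j \<noteq> y j \<Longrightarrow> n0 \<le> nat \<bar>j\<bar>" unfolding n0_def by (rule Least_le) blast
  have d: "cfg_dist x y = (1/2)^n0" using False by (simp add: cfg_dist_def n0_def)
  have "(1/2::real)^n0 < (1/2)^k \<longleftrightarrow> k < n0" by (simp add: power_strict_decreasing_iff)
  also have "\<dots> \<longleftrightarrow> (\<forall>j. \<bar>j\<bar> \<le> int k \<longrightarrow> x j = y j)"
  proof
    assume "k < n0" then show "\<forall>j. \<bar>j\<bar> \<le> int k \<longrightarrow> x j = y j"
      using n0le by force
  next
    assume H: "\<forall>j. \<bar>j\<bar> \<le> int k \<longrightarrow> x j = y j"
    from n0w obtain j where "nat \<bar>j\<bar> = n0" "x j \<noteq> y j" by blast
    with H show "k < n0" by force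
  qed
  finally show ?thesis using d by simp
qed

lemma cfg_dist_nonneg: "0 \<le> cfg_dist x y" by (simp add: cfg_dist_def)
lemma cfg_dist_le1: "cfg_dist x y \<le> 1" by (simp add: cfg_dist_def power_le_one)
lemma cfg_dist_one: "x 0 \<noteq> y 0 \<Longrightarrow> cfg_dist x y = 1"
proof -
  assume h: "x 0 \<noteq> y 0"
  then have "x \<noteq> y" by auto
  moreover have "(LEAST n. \<exists>j. nat \<bar>j\<bar> = n \<and> x j \<noteq> y j) = 0"
    by (rule Least_eq_0) (use h in auto)
  ultimately show ?thesis by (simp add: cfg_dist_def)
qed

lemma ex_pow_lt: "0 < (r::real) \<Longrightarrow> \<exists>N. (1/2::real)^N < r"
  using real_arch_pow_inv[of r "1/2"] by auto

definition ter :: "(int \<Rightarrow> nat) \<Rightarrow> int \<Rightarrow> nat" where "ter x i = x i mod 3"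
definition ifo :: "(int \<Rightarrow> nat) \<Rightarrow> int \<Rightarrow> bool" where "ifo x i = (x i div 3 mod 2 = 1)"
definition mk :: "(int \<Rightarrow> nat) \<Rightarrow> int \<Rightarrow> bool" where "mk x i = (x i div 6 mod 2 = 1)"
definition enc :: "nat \<Rightarrow> bool \<Rightarrow> bool \<Rightarrow> nat" where
  "enc t b m = t + 3 * of_bool b + 6 * of_bool m"
definition busy :: "(int \<Rightarrow> nat) \<Rightarrow> int \<Rightarrow> bool" where
  "busy x i = (ifo x i \<or> ifo x (i-1) \<or> mk x (i-1) \<or> mk x (i-2))"
definition CA :: "(int \<Rightarrow> nat) \<Rightarrow> (int \<Rightarrow> nat)" where
  "CA x = (\<lambda>i. enc (ter x i) (ifo x (i+1) \<and> \<not> (ter x i = 2 \<and> busy x i))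
                           (ter x i = 1 \<and> (mk x (i-1) \<or> ifo x i)))"

lemma enc_dec:
  assumes "t < 3"
  shows "enc t b m mod 3 = t" "(enc t b m div 3 mod 2 = 1) = b" "(enc t b m div 6 mod 2 = 1) = m"
    "enc t b m < 12"
proof -
  have "t = 0 \<or> t = 1 \<or> t = 2" using assms by auto
  then show "enc t b m mod 3 = t" "(enc t b m div 3 mod 2 = 1) = b" "(enc t b m div 6 mod 2 = 1) = m"
    "enc t b m < 12" by (cases b; cases m; auto simp: enc_def)+
qed

lemma ter_lt: "ter x i < 3" by (simp add: ter_def)

lemma ter_CA[simp]: "ter (CA x) i = ter x i"
  by (simp add: ter_def CA_def enc_dec(1)[OF ter_lt[unfolded ter_def]])
lemma ifo_CA: "ifo (CA x) i = (ifo x (i+1) \<and> \<not> (ter x i = 2 \<and> busy x i))"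
  using enc_dec(2)[OF ter_lt] by (simp add: ifo_def CA_def)
lemma mk_CA: "mk (CA x) i = (ter x i = 1 \<and> (mk x (i-1) \<or> ifo x i))"
  using enc_dec(3)[OF ter_lt] by (simp add: mk_def CA_def)
lemma CA_lt: "CA x i < 12" using enc_dec(4)[OF ter_lt] by (simp add: CA_def)
lemma CA_enc: "CA x j = enc (ter (CA x) j) (ifo (CA x) j) (mk (CA x) j)"
  by (simp add: ifo_CA mk_CA) (simp add: CA_def)

lemma ter_orb[simp]: "ter ((CA^^n) x) i = ter x i"
  by (induction n) auto

lemma ifo_step: "ifo ((CA^^Suc n) x) i = (ifo ((CA^^n) x) (i+1) \<and> \<not> (ter x i = 2 \<and> busy ((CA^^n) x) i))"
  by (simp add: ifo_CA)
lemma mk_step: "mk ((CA^^Suc n) x) i = (ter x i = 1 \<and> (mk ((CA^^n) x) (i-1) \<or> ifo ((CA^^n) x) i))"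
  by (simp add: mk_CA)

lemma ifo_back: "ifo ((CA^^(n+k)) x) j \<Longrightarrow> ifo ((CA^^n) x) (j + int k)"
proof (induction k arbitrary: j)
  case 0 then show ?case by simp
next
  case (Suc k)
  then have "ifo ((CA^^(n+k)) x) (j+1)" by (simp add: ifo_CA)
  then have "ifo ((CA^^n) x) (j + 1 + int k)" using Suc.IH by blast
  then show ?case by (simp add: algebra_simps)
qed

lemma ifo_back0: "ifo ((CA^^k) x) j \<Longrightarrow> ifo x (j + int k)"
  using ifo_back[of 0 k x j] by simp

lemma ifo_free: "(\<forall>i. j \<le> i \<and> i < j + int k \<longrightarrow> ter x i \<noteq> 2) \<Longrightarrow>
   ifo ((CA^^(n+k)) x) j = ifo ((CA^^n) x) (j + int k)"
proof (induction k arbitrary: j)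
  case 0 then show ?case by simp
next
  case (Suc k)
  have "ter x j \<noteq> 2" using Suc.prems by auto
  then have "ifo ((CA^^(n+Suc k)) x) j = ifo ((CA^^(n+k)) x) (j+1)" by (simp add: ifo_CA)
  also have "\<dots> = ifo ((CA^^n) x) (j + 1 + int k)" using Suc.prems by (intro Suc.IH) auto
  finally show ?case by (simp add: algebra_simps)
qed

lemma CA_local: "(\<forall>j. \<bar>j\<bar> \<le> int k + 2 \<longrightarrow> x j = y j) \<Longrightarrow> \<bar>i\<bar> \<le> int k \<Longrightarrow> CA x i = CA y i"
  by (simp add: CA_def ter_def ifo_def mk_def busy_def)

lemma CA_shift: "CA (shift x) = shift (CA x)"
  by (rule ext) (simp add: CA_def ter_def ifo_def mk_def busy_def shift_def algebra_simps)

abbreviation "AA \<equiv> {..<(12::nat)}"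

lemma CA_is: "cellular_automaton AA CA"
  unfolding cellular_automaton_def
proof (intro conjI ballI allI impI)
  show "finite AA" by simp
  fix x assume "x \<in> full_shift AA"
  show "CA x \<in> full_shift AA" by (simp add: full_shift_def CA_lt)
  show "CA (shift x) = shift (CA x)" by (rule CA_shift)
next
  fix x :: "int \<Rightarrow> nat" and e :: real assume e: "0 < e"
  obtain k where k: "(1/2::real)^k < e" using ex_pow_lt[OF e] by blast
  show "\<exists>d>0. \<forall>y\<in>full_shift AA. cfg_dist x y < d \<longrightarrow> cfg_dist (CA x) (CA y) < e"
  proof (intro exI[of _ "(1/2)^(k+2)"] conjI ballI impI)
    fix y assume "cfg_dist x y < (1/2)^(k+2)"
    then have "\<forall>j. \<bar>j\<bar> \<le> int k + 2 \<longrightarrow> x j = y j" using cfg_dist_lt_iff[of x y "k+2"] by simp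
    then have "\<forall>j. \<bar>j\<bar> \<le> int k \<longrightarrow> CA x j = CA y j" using CA_local by blast
    then have "cfg_dist (CA x) (CA y) < (1/2)^k" by (simp add: cfg_dist_lt_iff)
    then show "cfg_dist (CA x) (CA y) < e" using k by simp
  qed simp
qed

lemma limsup_upper:
  assumes "\<And>N. N \<ge> 1 \<Longrightarrow> f N \<le> c + C / real N"
  shows "limsup (\<lambda>N. ereal (f N)) \<le> ereal c"
proof -
  have "limsup (\<lambda>N. ereal (f N)) \<le> limsup (\<lambda>N. ereal (c + C / real N))"
    by (rule Limsup_mono) (use assms in \<open>auto intro!: eventually_sequentiallyI[of 1]\<close>)
  also have "\<dots> = ereal c"
  proof (rule lim_imp_Limsup)
    show "(\<lambda>N. ereal (c + C / real N)) \<longlonglongrightarrow> ereal c"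
      using tendsto_add[OF tendsto_const[of c] lim_const_over_n[of C]]
      by (simp add: tendsto_ereal)
  qed simp
  finally show ?thesis .
qed

lemma limsup_lower:
  assumes "\<And>N. N \<ge> 1 \<Longrightarrow> c + C / real N \<le> f N"
  shows "ereal c \<le> limsup (\<lambda>N. ereal (f N))"
proof -
  have "ereal c = limsup (\<lambda>N. ereal (c + C / real N))"
  proof (rule lim_imp_Limsup[symmetric])
    show "(\<lambda>N. ereal (c + C / real N)) \<longlonglongrightarrow> ereal c"
      using tendsto_add[OF tendsto_const[of c] lim_const_over_n[of C]]
      by (simp add: tendsto_ereal)
  qed simp
  also have "\<dots> \<le> limsup (\<lambda>N. ereal (f N))"
    by (rule Limsup_mono) (use assms in \<open>auto intro!: eventually_sequentiallyI[of 1]\<close>)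
  finally show ?thesis .
qed



lemma travel:
  fixes m P :: nat and x :: "int \<Rightarrow> nat"
  assumes P: "P \<ge> 5*m+5" and mge: "m \<ge> 1"
  defines "y0 \<equiv> (\<lambda>j. if \<bar>j\<bar> \<le> int m then x j else 0)"
  defines "y1 \<equiv> y0(int P := 3)"
  shows "ifo ((CA^^P) y1) 0" "\<not> ifo ((CA^^P) y0) 0"
proof -
  have F1: "\<And>j. \<bar>j\<bar> > int m \<Longrightarrow> ter y1 j = 0"
    by (simp add: y1_def y0_def ter_def)
  have F2: "\<And>j. ifo y1 j \<Longrightarrow> \<bar>j\<bar> \<le> int m \<or> j = int P"
    by (auto simp: y1_def y0_def ifo_def split: if_splits)
  have C: "\<forall>j. - int m - 1 \<le> j \<longrightarrow> j < int \<tau> - 3*int m - 2 \<longrightarrow> j < int P - int \<tau>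
            \<longrightarrow> \<not> mk ((CA^^\<tau>) y1) j" for \<tau>
  proof (induction \<tau>)
    case 0 then show ?case by auto
  next
    case (Suc \<tau>)
    show ?case
    proof (intro allI impI)
      fix j assume h1: "- int m - 1 \<le> j" and h2: "j < int (Suc \<tau>) - 3*int m - 2"
        and h3: "j < int P - int (Suc \<tau>)"
      show "\<not> mk ((CA^^Suc \<tau>) y1) j"
      proof (cases "j = - int m - 1")
        case True
        then have "ter y1 j = 0" by (intro F1) auto
        then show ?thesis by (simp add: mk_CA)
      next
        case False
        have a: "\<not> mk ((CA^^\<tau>) y1) (j-1)" using Suc.IH h1 h2 h3 False by auto
        have b: "\<not> ifo ((CA^^\<tau>) y1) j"
        proof
          assume "ifo ((CA^^\<tau>) y1) j"
          then have "ifo y1 (j + int \<tau>)" by (rule ifo_back0)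
          from F2[OF this] show False using h1 h2 h3 False by auto
        qed
        show ?thesis using a b by (simp add: mk_CA)
      qed
    qed
  qed
  have S: "\<tau> \<le> P \<Longrightarrow> ifo ((CA^^\<tau>) y1) (int P - int \<tau>)" for \<tau>
  proof (induction \<tau>)
    case 0 then show ?case by (simp add: y1_def ifo_def)
  next
    case (Suc \<tau>)
    define c where "c = int P - int \<tau> - 1"
    have IH: "ifo ((CA^^\<tau>) y1) (c+1)" using Suc c_def by simp
    have nb: "\<not> (ter y1 c = 2 \<and> busy ((CA^^\<tau>) y1) c)"
    proof
      assume g: "ter y1 c = 2 \<and> busy ((CA^^\<tau>) y1) c"
      then have cm: "\<bar>c\<bar> \<le> int m" using F1[of c] by (cases "\<bar>c\<bar> \<le> int m") auto
      have c0: "0 \<le> c" using Suc.prems c_def by simp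
      have i1: "\<not> ifo ((CA^^\<tau>) y1) c"
      proof
        assume "ifo ((CA^^\<tau>) y1) c"
        from F2[OF ifo_back0[OF this]] show False using c_def P by auto
      qed
      have i2: "\<not> ifo ((CA^^\<tau>) y1) (c-1)"
      proof
        assume "ifo ((CA^^\<tau>) y1) (c-1)"
        from F2[OF ifo_back0[OF this]] show False using c_def P by auto
      qed
      have m1: "\<not> mk ((CA^^\<tau>) y1) (c-1)" using C[of \<tau>] cm c0 c_def P mge by auto
      have m2: "\<not> mk ((CA^^\<tau>) y1) (c-2)" using C[of \<tau>] cm c0 c_def P mge by auto
      show False using g i1 i2 m1 m2 by (simp add: busy_def)
    qed
    have "ifo ((CA^^Suc \<tau>) y1) c" using IH nb by (simp add: ifo_CA)
    then show ?case by (simp add: c_def algebra_simps)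
  qed
  show "ifo ((CA^^P) y1) 0" using S[of P] by simp
  show "\<not> ifo ((CA^^P) y0) 0"
  proof
    assume "ifo ((CA^^P) y0) 0"
    then have "ifo y0 (int P)" using ifo_back0 by fastforce
    then show False using P by (simp add: y0_def ifo_def)
  qed
qed

lemma sum_lower:
  fixes g :: "nat \<Rightarrow> real"
  assumes "\<And>i. 0 \<le> g i" "\<And>i. N0 \<le> i \<Longrightarrow> 1 \<le> g i"
  shows "real N - real N0 \<le> (\<Sum>i=1..N. g i)"
proof (induction N)
  case 0 then show ?case by simp
next
  case (Suc N)
  have s: "(\<Sum>i=1..Suc N. g i) = (\<Sum>i=1..N. g i) + g (Suc N)" by simp
  show ?case
  proof (cases "N0 \<le> Suc N")
    case True then show ?thesis using Suc assms(2)[OF True] s by simp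
  next
    case False
    have "0 \<le> (\<Sum>i=1..Suc N. g i)" using assms(1) by (simp add: sum_nonneg)
    then show ?thesis using False by simp
  qed
qed

lemma no_diam_point:
  assumes x: "x \<in> full_shift AA"
  shows "\<not> diam_mean_eq_point (full_shift AA) cfg_dist CA x"
proof
  assume "diam_mean_eq_point (full_shift AA) cfg_dist CA x"
  then obtain \<delta> where d0: "\<delta> > 0" and lt:
    "limsup (\<lambda>n. ereal ((1 / real n) * (\<Sum>i=1..n. diam_in cfg_dist ((CA ^^ i) ` ball_in (full_shift AA) cfg_dist x \<delta>)))) < ereal 1"
    unfolding diam_mean_eq_point_def by (meson zero_less_one)
  obtain m0 where m0: "(1/2::real)^m0 < \<delta>" using ex_pow_lt[OF d0] by blast
  define m where "m = Suc m0"
  have m: "(1/2::real)^m < \<delta>"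
  proof -
    have "(1/2::real)^Suc m0 \<le> (1/2)^m0" by (rule power_decreasing) auto
    then show ?thesis using m0 unfolding m_def by linarith
  qed
  have m1: "m \<ge> 1" by (simp add: m_def)
  define B where "B = ball_in (full_shift AA) cfg_dist x \<delta>"
  define g where "g i = diam_in cfg_dist ((CA ^^ i) ` B)" for i
  have inB: "y \<in> B" if "y \<in> full_shift AA" "\<forall>j. \<bar>j\<bar> \<le> int m \<longrightarrow> x j = y j" for y
  proof -
    have "cfg_dist x y < (1/2)^m" using that cfg_dist_lt_iff by blast
    then show ?thesis using that m by (simp add: B_def ball_in_def)
  qed
  have bdd: "bdd_above {cfg_dist a b | a b. a \<in> S \<and> b \<in> S}" for S
    by (rule bdd_aboveI[of _ 1]) (auto simp: cfg_dist_le1)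
  have g0: "0 \<le> g i" for i
  proof -
    have "x \<in> B" using x d0 by (simp add: B_def ball_in_def cfg_dist_def)
    then have "0 \<in> {cfg_dist a b | a b. a \<in> (CA^^i) ` B \<and> b \<in> (CA^^i) ` B}"
      by (force simp: cfg_dist_def)
    then show ?thesis unfolding g_def diam_in_def by (rule cSup_upper[OF _ bdd])
  qed
  have g1: "1 \<le> g P" if P: "5*m+5 \<le> P" for P
  proof -
    define y0 where "y0 = (\<lambda>j. if \<bar>j\<bar> \<le> int m then x j else 0)"
    define y1 where "y1 = y0(int P := 3)"
    have t: "ifo ((CA^^P) y1) 0" "\<not> ifo ((CA^^P) y0) 0"
      using travel[OF P m1, of x] by (simp_all add: y0_def y1_def)
    have X0: "y0 \<in> full_shift AA" using x by (auto simp: full_shift_def y0_def)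
    have X1: "y1 \<in> full_shift AA" using X0 by (auto simp: full_shift_def y1_def)
    have B0: "y0 \<in> B" by (rule inB[OF X0]) (simp add: y0_def)
    have B1: "y1 \<in> B" by (rule inB[OF X1]) (use P in \<open>simp add: y0_def y1_def\<close>)
    have "(CA^^P) y1 0 \<noteq> (CA^^P) y0 0" using t by (auto simp: ifo_def)
    then have "cfg_dist ((CA^^P) y1) ((CA^^P) y0) = 1" by (rule cfg_dist_one)
    then have "1 \<in> {cfg_dist a b | a b. a \<in> (CA^^P) ` B \<and> b \<in> (CA^^P) ` B}"
      using B0 B1 by force
    then show ?thesis unfolding g_def diam_in_def by (rule cSup_upper[OF _ bdd])
  qed
  have "ereal 1 \<le> limsup (\<lambda>n. ereal ((1 / real n) * (\<Sum>i=1..n. g i)))"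
  proof (rule limsup_lower[of 1 "- real (5*m+5)"])
    fix N :: nat assume N: "N \<ge> 1"
    have "real N - real (5*m+5) \<le> (\<Sum>i=1..N. g i)" by (rule sum_lower) (use g0 g1 in auto)
    then have "(real N - real (5*m+5)) / real N \<le> (\<Sum>i=1..N. g i) / real N"
      using N by (intro divide_right_mono) auto
    moreover have "(real N - real (5*m+5)) / real N = 1 + - real (5*m+5) / real N"
      using N by (simp add: field_simps)
    ultimately show "1 + - real (5*m+5) / real N \<le> (1 / real N) * (\<Sum>i=1..N. g i)" by simp
  qed
  then show False using lt by (simp add: g_def B_def)
qed



lemma ball_cyl: "y \<in> ball_in X cfg_dist z ((1/2)^N) \<longleftrightarrow> y \<in> X \<and> (\<forall>j. \<bar>j\<bar> \<le> int N \<longrightarrow> z j = y j)"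
  by (simp add: ball_in_def cfg_dist_lt_iff)

lemma baire:
  fixes U :: "nat \<Rightarrow> (int \<Rightarrow> nat) set"
  assumes U: "\<forall>n. open_in_sp X cfg_dist (U n) \<and> dense_in_sp X cfg_dist (U n)"
    and X: "X = full_shift AA"
  shows "\<exists>z. z \<in> (\<Inter>n. U n)"
proof -
  define good where "good n p q \<longleftrightarrow> fst q \<in> X \<and> snd p < snd q
      \<and> (\<forall>j. \<bar>j\<bar> \<le> int (snd p) \<longrightarrow> fst q j = fst p j)
      \<and> ball_in X cfg_dist (fst q) ((1/2)^(snd q)) \<subseteq> U n"
    for n :: nat and p q :: "(int \<Rightarrow> nat) \<times> nat"
  have ex: "\<exists>q. good n p q" if p: "fst p \<in> X" for n p
  proof -
    obtain z N where zN: "p = (z, N)" by (cases p)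
    have zX: "z \<in> X" using p zN by simp
    have "ball_in X cfg_dist z ((1/2)^N) \<inter> U n \<noteq> {}"
      using U zX unfolding dense_in_sp_def by simp
    then obtain w where w1: "w \<in> ball_in X cfg_dist z ((1/2)^N)" and w2: "w \<in> U n" by blast
    have wX: "w \<in> X" and wz: "\<forall>j. \<bar>j\<bar> \<le> int N \<longrightarrow> z j = w j" using w1 by (simp_all add: ball_cyl)
    obtain r where r: "r > 0" "ball_in X cfg_dist w r \<subseteq> U n"
      using U w2 unfolding open_in_sp_def by blast
    obtain M where M: "(1/2::real)^M < r" using ex_pow_lt[OF r(1)] by blast
    define N' where "N' = max M (Suc N)"
    have PM: "(1/2::real)^N' \<le> (1/2)^M" unfolding N'_def by (rule power_decreasing) auto
    have Q: "(1/2::real)^N' < r" using M PM by linarith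
    have "ball_in X cfg_dist w ((1/2)^N') \<subseteq> ball_in X cfg_dist w r"
      unfolding ball_in_def using Q by (auto dest: order.strict_trans[OF _ Q])
    then have "good n p (w, N')" using r wX wz zN unfolding good_def N'_def by auto
    then show ?thesis by blast
  qed
  define st :: "nat \<Rightarrow> (int \<Rightarrow> nat) \<times> nat" where
    "st n = rec_nat ((\<lambda>_. 0), 0) (\<lambda>n p. SOME q. good n p q) n" for n
  have st0: "st 0 = ((\<lambda>_. 0), 0)" by (simp add: st_def)
  have stS: "st (Suc n) = (SOME q. good n (st n) q)" for n by (simp add: st_def)
  have G: "fst (st n) \<in> X \<and> good n (st n) (st (Suc n))" for n
  proof (induction n)
    case 0
    have "fst (st 0) \<in> X" using X by (simp add: st0 full_shift_def)
    then show ?case using ex[of "st 0" 0] stS[of 0] by (metis someI_ex)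
  next
    case (Suc n)
    then have "fst (st (Suc n)) \<in> X" by (simp add: good_def)
    then show ?case using ex[of "st (Suc n)" "Suc n"] stS[of "Suc n"] by (metis someI_ex)
  qed
  define Z where "Z n = fst (st n)" for n
  define NN where "NN n = snd (st n)" for n
  have ZX: "Z n \<in> X" for n using G Z_def by simp
  have NNs: "NN n < NN (Suc n)" for n using G[of n] by (simp add: good_def NN_def)
  have NNge: "n \<le> NN n" for n
  proof (induction n)
    case (Suc n) then show ?case using NNs[of n] by simp
  qed simp
  have NNmono: "n \<le> k \<Longrightarrow> NN n \<le> NN k" for n k
    using NNs by (meson lift_Suc_mono_le order.strict_implies_order)
  have agr: "n \<le> k \<Longrightarrow> \<forall>j. \<bar>j\<bar> \<le> int (NN n) \<longrightarrow> Z k j = Z n j" for n k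
  proof (induction k rule: dec_induct)
    case base then show ?case by simp
  next
    case (step k)
    have "\<forall>j. \<bar>j\<bar> \<le> int (NN k) \<longrightarrow> Z (Suc k) j = Z k j"
      using G[of k] by (simp add: good_def Z_def NN_def)
    moreover have "NN n \<le> NN k" using NNmono step by simp
    ultimately show ?case using step by force
  qed
  have balls: "ball_in X cfg_dist (Z (Suc n)) ((1/2)^(NN (Suc n))) \<subseteq> U n" for n
    using G[of n] by (simp add: good_def Z_def NN_def)
  define z where "z i = Z (Suc (nat \<bar>i\<bar>)) i" for i
  have zX: "z \<in> X" using ZX X by (simp add: full_shift_def z_def)
  have "z \<in> U n" for n
  proof -
    have "\<forall>j. \<bar>j\<bar> \<le> int (NN (Suc n)) \<longrightarrow> Z (Suc n) j = z j"
    proof (intro allI impI)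
      fix j assume j: "\<bar>j\<bar> \<le> int (NN (Suc n))"
      show "Z (Suc n) j = z j"
      proof (cases "nat \<bar>j\<bar> \<le> n")
        case True
        have "\<bar>j\<bar> \<le> int (NN (Suc (nat \<bar>j\<bar>)))" using NNge[of "Suc (nat \<bar>j\<bar>)"] by linarith
        then show ?thesis using agr[of "Suc (nat \<bar>j\<bar>)" "Suc n"] True by (simp add: z_def)
      next
        case False
        then show ?thesis using agr[of "Suc n" "Suc (nat \<bar>j\<bar>)"] j by (simp add: z_def)
      qed
    qed
    then have "z \<in> ball_in X cfg_dist (Z (Suc n)) ((1/2)^(NN (Suc n)))" using zX by (simp add: ball_cyl)
    then show ?thesis using balls by blast
  qed
  then show ?thesis by blast
qed



lemma prop_marker:
  "(\<forall>i. c \<le> i \<and> i \<le> c + int r \<longrightarrow> ter z i = 1) \<Longrightarrow> ifo ((CA^^t) z) c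
   \<Longrightarrow> mk ((CA^^(t+1+r)) z) (c + int r)"
proof (induction r)
  case 0 then show ?case by (simp add: mk_CA)
next
  case (Suc r)
  have "mk ((CA^^(t+1+r)) z) (c + int r)" using Suc by auto
  moreover have "ter z (c + int (Suc r)) = 1" using Suc.prems by auto
  ultimately show ?case by (simp add: mk_CA algebra_simps)
qed

lemma spacing:
  assumes int: "\<forall>i. p < i \<and> i < q \<longrightarrow> ter z i = 1" and gate: "ter z q = 2"
    and qp: "q = p + int L + 1" and L2: "L \<ge> 2"
    and h: "ifo ((CA^^\<sigma>) z) q" and s1: "1 \<le> s" and s2: "s \<le> 2*L+1"
  shows "\<not> ifo ((CA^^(\<sigma>+s)) z) q"
proof -
  define u where "u = s - 1"
  have su: "\<sigma> + s = Suc (\<sigma> + u)" using s1 u_def by simp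
  have nogate: "\<forall>i. q - int k \<le> i \<and> i < q - int k + int k \<longrightarrow> ter z i \<noteq> 2" if "k \<le> L" for k
    using int qp that by force
  have bk: "ifo ((CA^^(\<sigma>+k)) z) (q - int k)" if "k \<le> L" for k
    using ifo_free[OF nogate[OF that], of \<sigma>] h by simp
  have isbusy: "busy ((CA^^(\<sigma>+u)) z) q"
  proof (cases "u = 0")
    case True then show ?thesis using h by (simp add: busy_def)
  next
    case False
    show ?thesis
    proof (cases "u = 1")
      case True then show ?thesis using bk[of 1] L2 by (simp add: busy_def)
    next
      case False
      obtain v where "u = 2 * v \<or> u = 2 * v+1" by (metis dvd_mult_div_cancel odd_two_times_div_two_succ)
      then show ?thesis
      proof
        assume us: "u = 2 * v"
        have vv: "1 \<le> v" "v \<le> L" using us \<open>u \<noteq> 0\<close> s2 u_def by auto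
        have "mk ((CA^^(\<sigma>+v+1+(v-1))) z) (q - int v + int (v-1))"
          by (rule prop_marker) (use int qp vv bk[OF vv(2)] in auto)
        moreover have "\<sigma>+v+1+(v-1) = \<sigma>+u" "q - int v + int (v-1) = q - 1" using us vv by auto
        ultimately have "mk ((CA^^(\<sigma>+u)) z) (q - 1)" by metis
        then show ?thesis by (simp add: busy_def)
      next
        assume us: "u = 2 * v+1"
        have vv: "1 \<le> v" "v+1 \<le> L" using us \<open>u \<noteq> 0\<close> \<open>u \<noteq> 1\<close> s2 u_def by auto
        have "mk ((CA^^(\<sigma>+(v+1)+1+(v-1))) z) (q - int (v+1) + int (v-1))"
          by (rule prop_marker) (use int qp vv bk[OF vv(2)] in auto)
        moreover have "\<sigma>+(v+1)+1+(v-1) = \<sigma>+u" "q - int (v+1) + int (v-1) = q - 2" using us vv by auto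
        ultimately have "mk ((CA^^(\<sigma>+u)) z) (q - 2)" by metis
        then show ?thesis by (simp add: busy_def)
      qed
    qed
  qed
  show ?thesis using isbusy gate su by (simp add: ifo_CA)
qed

lemma emptiness:
  assumes ta: "ter z a \<noteq> 1" and ap: "a \<le> p" and D: "D = 2 * nat (p - a) + 2" and Dn: "D \<le> n"
    and no: "\<forall>t. n - D \<le> t \<and> t < n \<longrightarrow> \<not> ifo ((CA^^t) z) (p+1)"
    and j: "a \<le> j" "j \<le> p"
  shows "\<not> ifo ((CA^^n) z) j \<and> \<not> mk ((CA^^n) z) j"
proof -
  have I0: "\<not> ifo ((CA^^t) z) i" if i: "a \<le> i" "i \<le> p" and t: "t \<le> n" "n - D + nat (p + 1 - i) \<le> t" for i t
  proof
    assume H: "ifo ((CA^^t) z) i"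
    define k where "k = nat (p + 1 - i)"
    have t0: "t = (t - k) + k" using t k_def by simp
    have "ifo ((CA^^(t-k)) z) (i + int k)" using ifo_back[of "t-k" k z i] H t0 by simp
    moreover have "i + int k = p + 1" using i k_def by simp
    moreover have "n - D \<le> t - k" "t - k < n" using t k_def i by auto
    ultimately show False using no by auto
  qed
  have M0: "\<forall>t. a + int d \<le> p \<longrightarrow> n - D + nat (p+1-a) + d + 1 \<le> t \<longrightarrow> t \<le> n
             \<longrightarrow> \<not> mk ((CA^^t) z) (a + int d)" for d
  proof (induction d)
    case 0
    show ?case
    proof (intro allI impI)
      fix t assume "n - D + nat (p+1-a) + 0 + 1 \<le> t"
      then obtain t' where "t = Suc t'" by (cases t) auto
      then show "\<not> mk ((CA^^t) z) (a + int 0)" using ta by (simp add: mk_CA)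
    qed
  next
    case (Suc d)
    show ?case
    proof (intro allI impI)
      fix t assume h1: "a + int (Suc d) \<le> p" and h2: "n - D + nat (p+1-a) + Suc d + 1 \<le> t" and h3: "t \<le> n"
      then obtain t' where tt: "t = Suc t'" by (cases t) auto
      have A: "\<not> mk ((CA^^t') z) (a + int d)" using Suc.IH h1 h2 h3 tt by auto
      have B: "\<not> ifo ((CA^^t') z) (a + int (Suc d))"
        by (rule I0) (use h1 h2 h3 tt ap in auto)
      show "\<not> mk ((CA^^t) z) (a + int (Suc d))" using A B tt by (simp add: mk_CA algebra_simps)
    qed
  qed
  have "\<not> mk ((CA^^n) z) (a + int (nat (j - a)))"
    using M0[of "nat (j-a)"] j D Dn by auto
  moreover have "\<not> ifo ((CA^^n) z) j" by (rule I0) (use j D Dn in auto)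
  ultimately show ?thesis using j by simp
qed

lemma spaced_card:
  assumes sp: "\<And>\<sigma> s. f \<sigma> \<Longrightarrow> 1 \<le> s \<Longrightarrow> s < S \<Longrightarrow> \<not> f (\<sigma> + s)" and S: "0 < S"
  shows "card {\<sigma>. \<sigma> < N \<and> f \<sigma>} \<le> N div S + 1"
proof -
  have inj: "inj_on (\<lambda>\<sigma>. \<sigma> div S) {\<sigma>. \<sigma> < N \<and> f \<sigma>}"
  proof (rule inj_onI)
    fix s1 s2 assume a1: "s1 \<in> {\<sigma>. \<sigma> < N \<and> f \<sigma>}" and a2: "s2 \<in> {\<sigma>. \<sigma> < N \<and> f \<sigma>}"
      and e: "s1 div S = s2 div S"
    have m1: "s1 mod S < S" "s2 mod S < S" using S by auto
    have d1: "S * (s2 div S) + s1 mod S = s1" using mult_div_mod_eq[of S s1] e by simp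
    have d2: "S * (s2 div S) + s2 mod S = s2" using mult_div_mod_eq[of S s2] by simp
    have close: "s2 - s1 < S" "s1 - s2 < S" using m1 d1 d2 by linarith+
    show "s1 = s2"
    proof (rule ccontr)
      assume ne: "s1 \<noteq> s2"
      show False
      proof (cases "s1 < s2")
        case True
        then show False using sp[of s1 "s2 - s1"] a1 a2 close by auto
      next
        case False
        then have "1 \<le> s1 - s2" "s2 + (s1 - s2) = s1" using ne by auto
        then show False using sp[of s2 "s1 - s2"] a1 a2 close by auto
      qed
    qed
  qed
  have "(\<lambda>\<sigma>. \<sigma> div S) ` {\<sigma>. \<sigma> < N \<and> f \<sigma>} \<subseteq> {..N div S}" by (auto intro: div_le_mono)
  then have "card {\<sigma>. \<sigma> < N \<and> f \<sigma>} \<le> card {..N div S}"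
    using card_inj_on_le[OF inj] by blast
  then show ?thesis by simp
qed



lemma alg_avg: "(n::real) > 0 \<Longrightarrow> s > 0 \<Longrightarrow>
  (1/n) * (n*A + (B + C*(n/s) + E)) = A + C/s + (B+E)/n"
  by (simp add: field_simps)

lemma mean_bound:
  fixes x y :: "int \<Rightarrow> nat" and a p :: int and L k N :: nat
  assumes k1: "k \<ge> 1" and ak: "a \<le> - int k" and pk: "int k \<le> p"
    and Lk: "L \<ge> k * (nat (p - a) + 1)" and L2: "L \<ge> 2"
    and ta: "ter x a \<noteq> 1" and tint: "\<forall>i. p < i \<and> i \<le> p + int L \<longrightarrow> ter x i = 1"
    and tg: "ter x (p + int L + 1) = 2"
    and agree: "\<forall>j. a \<le> j \<and> j \<le> p + int L + 1 \<longrightarrow> y j = x j"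
    and N: "N \<ge> 1"
  shows "(1/real N) * (\<Sum>i=1..N. cfg_dist ((CA^^i) x) ((CA^^i) y))
     \<le> 3 / real k + real (L + 3 * (2 * nat (p - a) + 2)) / real N"
proof -
  define q where "q = p + int L + 1"
  define D where "D = 2 * nat (p - a) + 2"
  define N0 where "N0 = L + D"
  define S where "S = 2 * L + 2"
  have ap: "a \<le> p" using ak pk by simp
  have tery: "\<forall>j. a \<le> j \<and> j \<le> q \<longrightarrow> ter y j = ter x j" using agree by (simp add: ter_def q_def)
  have Z: "ter z a \<noteq> 1 \<and> (\<forall>i. p < i \<and> i < q \<longrightarrow> ter z i = 1) \<and> ter z q = 2"
    if zt: "\<forall>j. a \<le> j \<and> j \<le> q \<longrightarrow> ter z j = ter x j" for z
  proof -
    have "ter z a = ter x a" using zt ap q_def by simp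
    moreover have "ter z q = ter x q" using zt ap q_def by simp
    moreover have "\<forall>i. p < i \<and> i < q \<longrightarrow> ter z i = 1" using zt tint ap q_def by force
    ultimately show ?thesis using ta tg q_def by simp
  qed
  have zx: "\<forall>j. a \<le> j \<and> j \<le> q \<longrightarrow> ter x j = ter x j" by simp
  have input: "ifo ((CA^^t) z) (p+1) = ifo ((CA^^(t-L)) z) q"
    if zt: "\<forall>j. a \<le> j \<and> j \<le> q \<longrightarrow> ter z j = ter x j" and tL: "L \<le> t" for z t
  proof -
    have ng: "\<forall>i. p + 1 \<le> i \<and> i < p + 1 + int L \<longrightarrow> ter z i \<noteq> 2" using Z[OF zt] q_def by force
    have "ifo ((CA^^((t-L)+L)) z) (p+1) = ifo ((CA^^(t-L)) z) (p + 1 + int L)"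
      by (rule ifo_free[OF ng])
    then show ?thesis using tL q_def by (simp add: algebra_simps)
  qed
  define bad where "bad n \<longleftrightarrow> \<not> (\<forall>j. \<bar>j\<bar> \<le> int k \<longrightarrow> (CA^^n) x j = (CA^^n) y j)" for n
  define H where "H = {\<sigma>. \<sigma> < N \<and> (ifo ((CA^^\<sigma>) x) q \<or> ifo ((CA^^\<sigma>) y) q)}"
  have good: "\<not> bad n" if n: "n \<le> N" "N0 \<le> n" and nH: "\<forall>\<sigma>\<in>H. \<not> (\<sigma>+L+1 \<le> n \<and> n \<le> \<sigma>+L+D)" for n
  proof -
    have emp: "\<not> ifo ((CA^^n) z) j \<and> \<not> mk ((CA^^n) z) j"
      if zt: "\<forall>j. a \<le> j \<and> j \<le> q \<longrightarrow> ter z j = ter x j" and zH: "\<forall>\<sigma>. \<sigma> < N \<and> ifo ((CA^^\<sigma>) z) q \<longrightarrow> \<sigma> \<in> H"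
        and j: "a \<le> j" "j \<le> p" for z j
    proof (rule emptiness[of z a p D n j])
      show "ter z a \<noteq> 1" using Z[OF zt] by simp
      show "\<forall>t. n - D \<le> t \<and> t < n \<longrightarrow> \<not> ifo ((CA^^t) z) (p+1)"
      proof (intro allI impI notI)
        fix t assume t: "n - D \<le> t \<and> t < n" and h: "ifo ((CA^^t) z) (p+1)"
        have tL: "L \<le> t" using t n N0_def by arith
        have "ifo ((CA^^(t-L)) z) q" using h input[OF zt tL] by simp
        moreover have "t - L < N" using t n by arith
        ultimately have "t - L \<in> H" using zH by blast
        moreover have "(t-L)+L+1 \<le> n \<and> n \<le> (t-L)+L+D" using t tL by arith
        ultimately show False using nH by blast
      qed
    qed (use ap D_def n N0_def j in auto)
    have xH: "\<forall>\<sigma>. \<sigma> < N \<and> ifo ((CA^^\<sigma>) x) q \<longrightarrow> \<sigma> \<in> H" by (simp add: H_def)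
    have yH: "\<forall>\<sigma>. \<sigma> < N \<and> ifo ((CA^^\<sigma>) y) q \<longrightarrow> \<sigma> \<in> H" by (simp add: H_def)
    have n1: "n \<ge> 1" using n N0_def D_def by simp
    then obtain n' where n': "n = Suc n'" by (cases n) auto
    show ?thesis unfolding bad_def
    proof (intro notI, elim notE, intro allI impI)
      fix j assume "\<bar>j\<bar> \<le> int k"
      then have j: "a \<le> j" "j \<le> p" using ak pk by auto
      have ex: "\<not> ifo ((CA^^n) x) j \<and> \<not> mk ((CA^^n) x) j" by (rule emp[OF zx xH j])
      have ey: "\<not> ifo ((CA^^n) y) j \<and> \<not> mk ((CA^^n) y) j" by (rule emp[OF tery yH j])
      have ty: "ter y j = ter x j" using tery j q_def by simp
      have "(CA^^n) x j = enc (ter x j) False False"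
        using CA_enc[of "(CA^^n') x" j] ex n' by simp
      moreover have "(CA^^n) y j = enc (ter x j) False False"
        using CA_enc[of "(CA^^n') y" j] ey n' ty by simp
      ultimately show "(CA^^n) x j = (CA^^n) y j" by simp
    qed
  qed
  have sub: "{n \<in> {1..N}. bad n} \<subseteq> {..<N0} \<union> (\<Union>\<sigma>\<in>H. {\<sigma>+L+1..\<sigma>+L+D})"
    using good by force
  have finH: "finite H" by (simp add: H_def)
  have cardB: "card {n \<in> {1..N}. bad n} \<le> N0 + card H * D"
  proof -
    have "card {n \<in> {1..N}. bad n} \<le> card ({..<N0} \<union> (\<Union>\<sigma>\<in>H. {\<sigma>+L+1..\<sigma>+L+D}))"
      by (rule card_mono[OF _ sub]) (simp add: finH)
    also have "\<dots> \<le> card {..<N0} + card (\<Union>\<sigma>\<in>H. {\<sigma>+L+1..\<sigma>+L+D})" by (rule card_Un_le)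
    also have "card (\<Union>\<sigma>\<in>H. {\<sigma>+L+1..\<sigma>+L+D}) \<le> (\<Sum>\<sigma>\<in>H. card {\<sigma>+L+1..\<sigma>+L+D})"
      by (rule card_UN_le[OF finH])
    also have "\<dots> = card H * D" by simp
    finally show ?thesis by simp
  qed
  have spz: "card {\<sigma>. \<sigma> < N \<and> ifo ((CA^^\<sigma>) z) q} \<le> N div S + 1"
    if zt: "\<forall>j. a \<le> j \<and> j \<le> q \<longrightarrow> ter z j = ter x j" for z
  proof (rule spaced_card)
    show "0 < S" by (simp add: S_def)
    fix \<sigma> s assume h: "ifo ((CA^^\<sigma>) z) q" and s: "1 \<le> s" "s < S"
    show "\<not> ifo ((CA^^(\<sigma>+s)) z) q"
      by (rule spacing[of p q z L]) (use Z[OF zt] q_def L2 h s S_def in auto)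
  qed
  have cardH: "card H \<le> 2 * (N div S + 1)"
  proof -
    have "H = {\<sigma>. \<sigma> < N \<and> ifo ((CA^^\<sigma>) x) q} \<union> {\<sigma>. \<sigma> < N \<and> ifo ((CA^^\<sigma>) y) q}"
      by (auto simp: H_def)
    then have "card H \<le> card {\<sigma>. \<sigma> < N \<and> ifo ((CA^^\<sigma>) x) q} + card {\<sigma>. \<sigma> < N \<and> ifo ((CA^^\<sigma>) y) q}"
      by (simp add: card_Un_le)
    then show ?thesis using spz[OF zx] spz[OF tery] by simp
  qed
  have dle: "cfg_dist ((CA^^i) x) ((CA^^i) y) \<le> (1/2)^k + of_bool (bad i)" for i
  proof (cases "bad i")
    case True
    have "0 \<le> (1/2::real)^k" by simp
    moreover have "of_bool (bad i) = (1::real)" using True by simp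
    ultimately show ?thesis using cfg_dist_le1[of "(CA^^i) x" "(CA^^i) y"] by linarith
  next
    case False
    then have "cfg_dist ((CA^^i) x) ((CA^^i) y) < (1/2)^k" by (simp add: bad_def cfg_dist_lt_iff)
    then show ?thesis by simp
  qed
  have sum1: "(\<Sum>i=1..N. cfg_dist ((CA^^i) x) ((CA^^i) y)) \<le> real N * (1/2)^k + real (card {n \<in> {1..N}. bad n})"
  proof -
    have "(\<Sum>i=1..N. cfg_dist ((CA^^i) x) ((CA^^i) y)) \<le> (\<Sum>i=1..N. (1/2)^k + of_bool (bad i))"
      by (rule sum_mono) (rule dle)
    also have "\<dots> = real N * (1/2)^k + real (card ({1..N} \<inter> {i. bad i}))"
      by (simp add: sum.distrib sum_of_bool_eq)
    also have "{1..N} \<inter> {i. bad i} = {n \<in> {1..N}. bad n}" by auto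
    finally show ?thesis .
  qed
  define P where "P = nat (p - a)"
  have cB: "real (card {n \<in> {1..N}. bad n}) \<le> real N0 + 2 * real D * (real N / real S) + 2 * real D"
  proof -
    have "real (card {n \<in> {1..N}. bad n}) \<le> real N0 + real (card H) * real D"
    proof -
      have "real (card {n \<in> {1..N}. bad n}) \<le> real (N0 + card H * D)" using cardB by (simp only: of_nat_le_iff)
      then show ?thesis by simp
    qed
    also have "real (card H) \<le> 2 * (real (N div S) + 1)"
    proof -
      have "real (card H) \<le> real (2 * (N div S + 1))" using cardH by (simp only: of_nat_le_iff)
      then show ?thesis by simp
    qed
    then have "real (card H) * real D \<le> 2 * (real (N div S) + 1) * real D" by (rule mult_right_mono) simp
    also have "real (N div S) \<le> real N / real S" by (rule of_nat_div_le_of_nat)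
    then have "2 * (real (N div S) + 1) * real D \<le> 2 * (real N / real S + 1) * real D"
      by (intro mult_right_mono) auto
    finally show ?thesis by (simp add: algebra_simps)
  qed
  have Npos: "real N > 0" using N by simp
  have "(1/real N) * (\<Sum>i=1..N. cfg_dist ((CA^^i) x) ((CA^^i) y))
        \<le> (1/real N) * (real N * (1/2)^k + (real N0 + 2 * real D * (real N / real S) + 2 * real D))"
    using sum1 cB Npos by (intro mult_left_mono) auto
  also have "\<dots> = (1/2)^k + 2 * real D / real S + (real N0 + 2 * real D) / real N"
    by (rule alg_avg) (use Npos in \<open>simp_all add: S_def\<close>)
  also have "(1/2::real)^k \<le> 1 / real k"
  proof -
    have "real k \<le> 2^k"
    proof -
      have "real k \<le> real (2^k)" using less_exp[of k] by (simp only: of_nat_le_iff less_imp_le)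
      then show ?thesis by simp
    qed
    then have "1 / (2::real)^k \<le> 1 / real k" using k1 by (intro divide_left_mono) auto
    then show ?thesis by (simp add: power_one_over)
  qed
  also have "2 * real D / real S \<le> 2 / real k"
  proof -
    have "real k * (real P + 1) \<le> real L"
    proof -
      have "real (k * (P + 1)) \<le> real L" using Lk P_def by (simp only: of_nat_le_iff)
      then show ?thesis by (simp add: algebra_simps)
    qed
    then have "2 * real D * real k \<le> 2 * real S" unfolding D_def S_def P_def[symmetric]
      by (simp add: algebra_simps)
    then show ?thesis using k1 by (simp add: field_simps S_def)
  qed
  finally show ?thesis unfolding N0_def D_def by (simp add: add_divide_distrib)
qed



definition UU :: "nat \<Rightarrow> (int \<Rightarrow> nat) set" where
  "UU n = {x \<in> full_shift AA. \<exists>a p L. a \<le> - int (Suc n) \<and> int (Suc n) \<le> p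
      \<and> L \<ge> Suc n * (nat (p - a) + 1) \<and> L \<ge> 2 \<and> ter x a \<noteq> 1
      \<and> (\<forall>i. p < i \<and> i \<le> p + int L \<longrightarrow> ter x i = 1) \<and> ter x (p + int L + 1) = 2}"

lemma UU_open: "open_in_sp (full_shift AA) cfg_dist (UU n)"
  unfolding open_in_sp_def
proof (intro conjI ballI)
  show "UU n \<subseteq> full_shift AA" by (auto simp: UU_def)
  fix x assume "x \<in> UU n"
  then obtain a p L where xX: "x \<in> full_shift AA" and w: "a \<le> - int (Suc n)" "int (Suc n) \<le> p"
      "L \<ge> Suc n * (nat (p - a) + 1)" "L \<ge> 2" "ter x a \<noteq> 1"
      "\<forall>i. p < i \<and> i \<le> p + int L \<longrightarrow> ter x i = 1" "ter x (p + int L + 1) = 2"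
    unfolding UU_def by blast
  define M where "M = nat (max (-a) (p + int L + 1))"
  show "\<exists>r>0. ball_in (full_shift AA) cfg_dist x r \<subseteq> UU n"
  proof (intro exI[of _ "(1/2)^M"] conjI subsetI)
    fix y assume "y \<in> ball_in (full_shift AA) cfg_dist x ((1/2)^M)"
    then have yX: "y \<in> full_shift AA" and ag: "\<forall>j. \<bar>j\<bar> \<le> int M \<longrightarrow> x j = y j" by (simp_all add: ball_cyl)
    have t: "ter y i = ter x i" if "a \<le> i" "i \<le> p + int L + 1" for i
      using ag that w M_def by (simp add: ter_def)
    have "a \<le> p" using w by simp
    then show "y \<in> UU n" unfolding UU_def using yX w t
      by (intro CollectI conjI exI[of _ a] exI[of _ p] exI[of _ L]) auto
  qed simp
qed

lemma UU_dense: "dense_in_sp (full_shift AA) cfg_dist (UU n)"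
  unfolding dense_in_sp_def
proof (intro ballI allI impI)
  fix x r assume xX: "x \<in> full_shift AA" and r: "(0::real) < r"
  obtain M where M: "(1/2::real)^M < r" using ex_pow_lt[OF r] by blast
  define M' where "M' = M + Suc n"
  define a where "a = - (int M' + 1)"
  define p where "p = int M' + 1"
  define L where "L = Suc n * (nat (p - a) + 1) + 2"
  define x' where "x' i = (if \<bar>i\<bar> \<le> int M' then x i else if p < i \<and> i \<le> p + int L then 1
                          else if i = p + int L + 1 then 2 else 0)" for i
  have x'X: "x' \<in> full_shift AA" using xX by (auto simp: full_shift_def x'_def)
  have "\<forall>j. \<bar>j\<bar> \<le> int M \<longrightarrow> x j = x' j" by (auto simp: x'_def M'_def)
  then have "cfg_dist x x' < (1/2)^M" by (simp add: cfg_dist_lt_iff)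
  then have inb: "x' \<in> ball_in (full_shift AA) cfg_dist x r" using x'X M by (simp add: ball_in_def)
  have f1: "a \<le> - int (Suc n)" by (simp add: a_def M'_def)
  have f2: "int (Suc n) \<le> p" by (simp add: p_def M'_def)
  have f3: "L \<ge> Suc n * (nat (p - a) + 1)" by (simp add: L_def)
  have f4: "L \<ge> 2" by (simp add: L_def)
  have f5: "ter x' a \<noteq> 1" by (simp add: ter_def x'_def a_def p_def)
  have f6: "\<forall>i. p < i \<and> i \<le> p + int L \<longrightarrow> ter x' i = 1" by (auto simp: ter_def x'_def p_def)
  have f7: "ter x' (p + int L + 1) = 2" by (simp add: ter_def x'_def p_def)
  have "x' \<in> UU n" unfolding UU_def using x'X f1 f2 f3 f4 f5 f6 f7 by blast
  then show "ball_in (full_shift AA) cfg_dist x r \<inter> UU n \<noteq> {}" using inb by blast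
qed

lemma mean_point:
  assumes x: "x \<in> (\<Inter>n. UU n)"
  shows "mean_eq_point (full_shift AA) cfg_dist CA x"
  unfolding mean_eq_point_def
proof (intro allI impI)
  fix \<epsilon> :: real assume e: "0 < \<epsilon>"
  define n where "n = nat \<lceil>3 / \<epsilon>\<rceil>"
  define k where "k = Suc n"
  have "3 / \<epsilon> < real k" unfolding k_def n_def by linarith
  moreover have kp: "real k > 0" by (simp add: k_def)
  ultimately have ke: "3 / real k < \<epsilon>" using e by (simp add: divide_less_eq mult.commute)
  have "x \<in> UU n" using x by blast
  then obtain a p L where xX: "x \<in> full_shift AA" and w: "a \<le> - int k" "int k \<le> p"
      "L \<ge> k * (nat (p - a) + 1)" "L \<ge> 2" "ter x a \<noteq> 1"
      "\<forall>i. p < i \<and> i \<le> p + int L \<longrightarrow> ter x i = 1" "ter x (p + int L + 1) = 2"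
    unfolding UU_def k_def by blast
  define M where "M = nat (max (-a) (p + int L + 1))"
  show "\<exists>\<delta>>0. \<forall>y\<in>ball_in (full_shift AA) cfg_dist x \<delta>.
        limsup (\<lambda>n. ereal (1 / real n * (\<Sum>i = 1..n. cfg_dist ((CA ^^ i) x) ((CA ^^ i) y)))) < ereal \<epsilon>"
  proof (intro exI[of _ "(1/2)^M"] conjI ballI)
    fix y assume "y \<in> ball_in (full_shift AA) cfg_dist x ((1/2)^M)"
    then have ag: "\<forall>j. \<bar>j\<bar> \<le> int M \<longrightarrow> x j = y j" by (simp add: ball_cyl)
    have ag2: "\<forall>j. a \<le> j \<and> j \<le> p + int L + 1 \<longrightarrow> y j = x j"
    proof (intro allI impI)
      fix j assume j: "a \<le> j \<and> j \<le> p + int L + 1"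
      have "\<bar>j\<bar> \<le> int M" using j w(1,2) unfolding M_def by linarith
      then show "y j = x j" using ag by metis
    qed
    have "limsup (\<lambda>N. ereal (1 / real N * (\<Sum>i = 1..N. cfg_dist ((CA ^^ i) x) ((CA ^^ i) y))))
          \<le> ereal (3 / real k)"
      by (rule limsup_upper) (rule mean_bound, use w ag2 k_def in auto)
    also have "\<dots> < ereal \<epsilon>" using ke by simp
    finally show "limsup (\<lambda>n. ereal (1 / real n * (\<Sum>i = 1..n. cfg_dist ((CA ^^ i) x) ((CA ^^ i) y)))) < ereal \<epsilon>" .
  qed simp
qed

theorem mainTheorem3:
  shows "\<exists>(A :: nat set) T. cellular_automaton A T
           \<and> almost_mean_eq (full_shift A) cfg_dist T
           \<and> \<not> almost_diam_mean_eq (full_shift A) cfg_dist T"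
proof (intro exI conjI)
  show "cellular_automaton AA CA" by (rule CA_is)
  show "almost_mean_eq (full_shift AA) cfg_dist CA"
    unfolding almost_mean_eq_def residual_in_def
  proof (intro exI[of _ UU] conjI allI)
    show "open_in_sp (full_shift AA) cfg_dist (UU n)" for n by (rule UU_open)
    show "dense_in_sp (full_shift AA) cfg_dist (UU n)" for n by (rule UU_dense)
    show "(\<Inter>n. UU n) \<subseteq> {x \<in> full_shift AA. mean_eq_point (full_shift AA) cfg_dist CA x}"
      using mean_point by (auto simp: UU_def)
  qed
  show "\<not> almost_diam_mean_eq (full_shift AA) cfg_dist CA"
  proof
    assume "almost_diam_mean_eq (full_shift AA) cfg_dist CA"
    then obtain U :: "nat \<Rightarrow> (int \<Rightarrow> nat) set" where
      U: "\<forall>n. open_in_sp (full_shift AA) cfg_dist (U n) \<and> dense_in_sp (full_shift AA) cfg_dist (U n)"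
      and sub: "(\<Inter>n. U n) \<subseteq> {x \<in> full_shift AA. diam_mean_eq_point (full_shift AA) cfg_dist CA x}"
      unfolding almost_diam_mean_eq_def residual_in_def by blast
    obtain z where "z \<in> (\<Inter>n. U n)" using baire[OF U refl] by blast
    then have "z \<in> full_shift AA" "diam_mean_eq_point (full_shift AA) cfg_dist CA z" using sub by auto
    then show False using no_diam_point by blast
  qed
qed

end
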